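(* Let $i\colon H\to G$, $\iota_E\colon E\to H$ and $\iota_F\colon F\to H$ be faithful functors of finite groupoids. Let $E\times_H F$ be the isocomma of $\iota_E$ and $\iota_F$, and $E\times_G F$ the isocomma of $i\iota_E$ and $i\iota_F$. Then the functor $E\times_HF\to E\times_GF$ sending $(x,y,h)$ to $(x,y,i(h))$ and a morphism $(e,f)$ to $(e,f)$ is fully faithful.
   Context: A finite groupoid is a finite category all of whose morphisms are invertible. For functors $a\colon X\to Z$ and $b\colon Y\to Z$ of finite groupoids, the isocomma groupoid $X\times_ZY$ has as objects the triples $(x,y,g)$ with $x$ an object of $X$, $y$ an object of $Y$ and $g\colon a(x)\to b(y)$ an isomorphism in $Z$; morphisms $(x,y,g)\to(x',y',g')$ are pairs $(h,k)$ of morphisms $h\colon x\to x'$ in $X$ and $k\colon y\to y'$ in $Y$ with $g'\,a(h)=b(k)\,g$. *)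

theory Defs
  imports Main
begin

text \<open>Small categories given by an object set, an arrow set, domain, codomain,
identities and composition.  Comp C g f is "g after f", defined when Cod f = Dom g.\<close>

record ('o, 'm) cat =
  Obj :: "'o set"
  Arr :: "'m set"
  Dom :: "'m \<Rightarrow> 'o"
  Cod :: "'m \<Rightarrow> 'o"
  Id :: "'o \<Rightarrow> 'm"
  Comp :: "'m \<Rightarrow> 'm \<Rightarrow> 'm"

definition hom :: "('o, 'm, 'x) cat_scheme \<Rightarrow> 'o \<Rightarrow> 'o \<Rightarrow> 'm set" where
  "hom C x y = {f \<in> Arr C. Dom C f = x \<and> Cod C f = y}"

definition category :: "('o, 'm, 'x) cat_scheme \<Rightarrow> bool" where
  "category C \<longleftrightarrow>
     (\<forall>f\<in>Arr C. Dom C f \<in> Obj C \<and> Cod C f \<in> Obj C)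
   \<and> (\<forall>x\<in>Obj C. Id C x \<in> hom C x x)
   \<and> (\<forall>f\<in>Arr C. \<forall>g\<in>Arr C. Cod C f = Dom C g \<longrightarrow> Comp C g f \<in> hom C (Dom C f) (Cod C g))
   \<and> (\<forall>f\<in>Arr C. Comp C (Id C (Cod C f)) f = f \<and> Comp C f (Id C (Dom C f)) = f)
   \<and> (\<forall>f\<in>Arr C. \<forall>g\<in>Arr C. \<forall>h\<in>Arr C. Cod C f = Dom C g \<and> Cod C g = Dom C h \<longrightarrow>
        Comp C h (Comp C g f) = Comp C (Comp C h g) f)"

definition iso :: "('o, 'm, 'x) cat_scheme \<Rightarrow> 'm \<Rightarrow> bool" where
  "iso C f \<longleftrightarrow> f \<in> Arr C \<and> (\<exists>g\<in>hom C (Cod C f) (Dom C f).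
      Comp C g f = Id C (Dom C f) \<and> Comp C f g = Id C (Cod C f))"

definition groupoid :: "('o, 'm, 'x) cat_scheme \<Rightarrow> bool" where
  "groupoid C \<longleftrightarrow> category C \<and> (\<forall>f\<in>Arr C. iso C f)"

definition finite_groupoid :: "('o, 'm, 'x) cat_scheme \<Rightarrow> bool" where
  "finite_groupoid C \<longleftrightarrow> groupoid C \<and> finite (Obj C) \<and> finite (Arr C)"

definition is_functor :: "('o, 'm, 'x) cat_scheme \<Rightarrow> ('p, 'n, 'y) cat_scheme \<Rightarrow>
    ('o \<Rightarrow> 'p) \<Rightarrow> ('m \<Rightarrow> 'n) \<Rightarrow> bool" where
  "is_functor C D Fo Fm \<longleftrightarrow>
     (\<forall>x\<in>Obj C. Fo x \<in> Obj D)
   \<and> (\<forall>f\<in>Arr C. Fm f \<in> hom D (Fo (Dom C f)) (Fo (Cod C f)))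
   \<and> (\<forall>x\<in>Obj C. Fm (Id C x) = Id D (Fo x))
   \<and> (\<forall>f\<in>Arr C. \<forall>g\<in>Arr C. Cod C f = Dom C g \<longrightarrow> Fm (Comp C g f) = Comp D (Fm g) (Fm f))"

definition faithful :: "('o, 'm, 'x) cat_scheme \<Rightarrow> ('p, 'n, 'y) cat_scheme \<Rightarrow>
    ('o \<Rightarrow> 'p) \<Rightarrow> ('m \<Rightarrow> 'n) \<Rightarrow> bool" where
  "faithful C D Fo Fm \<longleftrightarrow> is_functor C D Fo Fm \<and>
     (\<forall>x\<in>Obj C. \<forall>y\<in>Obj C. inj_on Fm (hom C x y))"

definition full :: "('o, 'm, 'x) cat_scheme \<Rightarrow> ('p, 'n, 'y) cat_scheme \<Rightarrow>
    ('o \<Rightarrow> 'p) \<Rightarrow> ('m \<Rightarrow> 'n) \<Rightarrow> bool" where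
  "full C D Fo Fm \<longleftrightarrow> is_functor C D Fo Fm \<and>
     (\<forall>x\<in>Obj C. \<forall>y\<in>Obj C. \<forall>g\<in>hom D (Fo x) (Fo y). \<exists>f\<in>hom C x y. Fm f = g)"

definition fully_faithful :: "('o, 'm, 'x) cat_scheme \<Rightarrow> ('p, 'n, 'y) cat_scheme \<Rightarrow>
    ('o \<Rightarrow> 'p) \<Rightarrow> ('m \<Rightarrow> 'n) \<Rightarrow> bool" where
  "fully_faithful C D Fo Fm \<longleftrightarrow> full C D Fo Fm \<and> faithful C D Fo Fm"

text \<open>A morphism (h,k) : s -> t is encoded as the
triple (s, (h, k), t) so that domain and codomain are recoverable.\<close>

type_synonym ('o1, 'o2, 'm3) icobj = "'o1 \<times> 'o2 \<times> 'm3"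
type_synonym ('o1, 'm1, 'o2, 'm2, 'm3) icarr =
  "('o1, 'o2, 'm3) icobj \<times> ('m1 \<times> 'm2) \<times> ('o1, 'o2, 'm3) icobj"

definition isocomma ::
  "('o1, 'm1, 'x1) cat_scheme \<Rightarrow> ('o2, 'm2, 'x2) cat_scheme \<Rightarrow> ('o3, 'm3, 'x3) cat_scheme \<Rightarrow>
   ('o1 \<Rightarrow> 'o3) \<Rightarrow> ('m1 \<Rightarrow> 'm3) \<Rightarrow> ('o2 \<Rightarrow> 'o3) \<Rightarrow> ('m2 \<Rightarrow> 'm3) \<Rightarrow>
   (('o1, 'o2, 'm3) icobj, ('o1, 'm1, 'o2, 'm2, 'm3) icarr) cat" where
  "isocomma X Y Z ao am bo bm =
    \<lparr> Obj = {(x, y, g). x \<in> Obj X \<and> y \<in> Obj Y \<and> g \<in> hom Z (ao x) (bo y) \<and> iso Z g},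
      Arr = {(s, (h, k), t).
               s \<in> {(x, y, g). x \<in> Obj X \<and> y \<in> Obj Y \<and> g \<in> hom Z (ao x) (bo y) \<and> iso Z g}
             \<and> t \<in> {(x, y, g). x \<in> Obj X \<and> y \<in> Obj Y \<and> g \<in> hom Z (ao x) (bo y) \<and> iso Z g}
             \<and> h \<in> hom X (fst s) (fst t) \<and> k \<in> hom Y (fst (snd s)) (fst (snd t))
             \<and> Comp Z (snd (snd t)) (am h) = Comp Z (bm k) (snd (snd s))},
      Dom = (\<lambda>(s, hk, t). s),
      Cod = (\<lambda>(s, hk, t). t),
      Id = (\<lambda>s. (s, (Id X (fst s), Id Y (fst (snd s))), s)),
      Comp = (\<lambda>(s', (h', k'), t') (s, (h, k), t). (s, (Comp X h' h, Comp Y k' k), t')) \<rparr>"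

end

theory Submission
  imports Defs
begin

theorem proposition4p1:
  fixes E :: "('a, 'b) cat" and F :: "('c, 'd) cat"
    and H :: "('e, 'f) cat" and G :: "('g, 'h) cat"
    and io :: "'e \<Rightarrow> 'g" and im :: "'f \<Rightarrow> 'h"
    and eo :: "'a \<Rightarrow> 'e" and em :: "'b \<Rightarrow> 'f"
    and fo :: "'c \<Rightarrow> 'e" and fm :: "'d \<Rightarrow> 'f"
  assumes "finite_groupoid E" and "finite_groupoid F"
    and "finite_groupoid H" and "finite_groupoid G"
    and "faithful H G io im"
    and "faithful E H eo em"
    and "faithful F H fo fm"
  shows "fully_faithful
           (isocomma E F H eo em fo fm)
           (isocomma E F G (io \<circ> eo) (im \<circ> em) (io \<circ> fo) (im \<circ> fm))
           (\<lambda>(x, y, h). (x, y, im h))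
           (\<lambda>(s, ef, t). ((\<lambda>(x, y, h). (x, y, im h)) s, ef, (\<lambda>(x, y, h). (x, y, im h)) t))"
proof -
  have cH: "category H" using assms(3) by (simp add: finite_groupoid_def groupoid_def)
  have isoG: "\<And>f. f \<in> Arr G \<Longrightarrow> iso G f" using assms(4) by (simp add: finite_groupoid_def groupoid_def)
  have fI: "is_functor H G io im" and injI: "\<And>x y. x \<in> Obj H \<Longrightarrow> y \<in> Obj H \<Longrightarrow> inj_on im (hom H x y)"
    using assms(5) by (auto simp: faithful_def)
  have fE: "is_functor E H eo em" using assms(6) by (simp add: faithful_def)
  have fF: "is_functor F H fo fm" using assms(7) by (simp add: faithful_def)
  note I = fI[unfolded is_functor_def] and EE = fE[unfolded is_functor_def] and FF = fF[unfolded is_functor_def]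
  note cHu = cH[unfolded category_def]
  let ?C = "isocomma E F H eo em fo fm"
  let ?D = "isocomma E F G (io \<circ> eo) (im \<circ> em) (io \<circ> fo) (im \<circ> fm)"
  let ?Fo = "(\<lambda>(x, y, h). (x, y, im h))"
  let ?Fm = "(\<lambda>(s, ef, t). (?Fo s, ef, ?Fo t))"
  have ob: "?Fo s \<in> Obj ?D" if "s \<in> Obj ?C" for s
    using that I isoG by (auto simp: isocomma_def hom_def)
  have ar: "?Fm f \<in> hom ?D (?Fo (Dom ?C f)) (?Fo (Cod ?C f))" if "f \<in> Arr ?C" for f
  proof -
    obtain x y g h k x' y' g' where f: "f = ((x,y,g),(h,k),(x',y',g'))" by (metis prod.exhaust)
    have s: "(x,y,g) \<in> Obj ?C" and t: "(x',y',g') \<in> Obj ?C" using that f by (auto simp: isocomma_def)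
    have h: "h \<in> hom E x x'" and k: "k \<in> hom F y y'" and eq: "Comp H g' (em h) = Comp H (fm k) g"
      using that f by (auto simp: isocomma_def)
    have g: "g \<in> hom H (eo x) (fo y)" and g': "g' \<in> hom H (eo x') (fo y')"
      using s t by (auto simp: isocomma_def)
    have emh: "em h \<in> hom H (eo x) (eo x')" using EE h by (auto simp: hom_def)
    have fmk: "fm k \<in> hom H (fo y) (fo y')" using FF k by (auto simp: hom_def)
    have "im (Comp H g' (em h)) = Comp G (im g') (im (em h))"
      using I g' emh by (auto simp: hom_def)
    moreover have "im (Comp H (fm k) g) = Comp G (im (fm k)) (im g)"
      using I g fmk by (auto simp: hom_def)
    ultimately have "Comp G (im g') (im (em h)) = Comp G (im (fm k)) (im g)" using eq by simp
    then show ?thesis using ob[OF s] ob[OF t] h k f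
      by (auto simp: isocomma_def hom_def)
  qed
  have idp: "?Fm (Id ?C s) = Id ?D (?Fo s)" if "s \<in> Obj ?C" for s
    by (auto simp: isocomma_def split: prod.splits)
  have cmp: "?Fm (Comp ?C g f) = Comp ?D (?Fm g) (?Fm f)" if "f \<in> Arr ?C" "g \<in> Arr ?C" for f g
    by (auto simp: isocomma_def split: prod.splits)
  have func: "is_functor ?C ?D ?Fo ?Fm"
    unfolding is_functor_def using ob ar idp cmp by blast
  have faith: "inj_on ?Fm (hom ?C s t)" for s t
    by (auto simp: inj_on_def hom_def isocomma_def split: prod.splits)
  have fullp: "\<exists>f\<in>hom ?C s t. ?Fm f = g" if s: "s \<in> Obj ?C" and t: "t \<in> Obj ?C"
    and gg: "g \<in> hom ?D (?Fo s) (?Fo t)" for s t g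
  proof -
    obtain x y a where sd: "s = (x,y,a)" by (metis prod.exhaust)
    obtain x' y' a' where td: "t = (x',y',a')" by (metis prod.exhaust)
    obtain s0 h k t0 where gd: "g = (s0,(h,k),t0)" by (metis prod.exhaust)
    have s0: "s0 = ?Fo s" and t0: "t0 = ?Fo t" using gg gd by (auto simp: hom_def isocomma_def)
    have a: "a \<in> hom H (eo x) (fo y)" and a': "a' \<in> hom H (eo x') (fo y')"
      and x: "x \<in> Obj E" and y': "y' \<in> Obj F"
      using s t sd td by (auto simp: isocomma_def)
    have h: "h \<in> hom E x x'" and k: "k \<in> hom F y y'"
      and eqG: "Comp G (im a') (im (em h)) = Comp G (im (fm k)) (im a)"
      using gg gd s0 t0 sd td by (auto simp: hom_def isocomma_def)
    have emh: "em h \<in> hom H (eo x) (eo x')" using EE h by (auto simp: hom_def)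
    have fmk: "fm k \<in> hom H (fo y) (fo y')" using FF k by (auto simp: hom_def)
    have c1: "Comp H a' (em h) \<in> hom H (eo x) (fo y')"
      using cHu emh a' by (auto simp: hom_def)
    have c2: "Comp H (fm k) a \<in> hom H (eo x) (fo y')"
      using cHu fmk a by (auto simp: hom_def)
    have "im (Comp H a' (em h)) = Comp G (im a') (im (em h))"
      using I a' emh by (auto simp: hom_def)
    moreover have "im (Comp H (fm k) a) = Comp G (im (fm k)) (im a)"
      using I a fmk by (auto simp: hom_def)
    ultimately have "im (Comp H a' (em h)) = im (Comp H (fm k) a)" using eqG by simp
    moreover have "eo x \<in> Obj H" using EE x by auto
    moreover have "fo y' \<in> Obj H" using FF y' by auto
    ultimately have eqH: "Comp H a' (em h) = Comp H (fm k) a"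
      using injI c1 c2 by (meson inj_onD)
    have "(s,(h,k),t) \<in> hom ?C s t"
      using s t h k eqH sd td by (auto simp: hom_def isocomma_def)
    moreover have "?Fm (s,(h,k),t) = g" using gd s0 t0 by simp
    ultimately show ?thesis by blast
  qed
  show ?thesis
    unfolding fully_faithful_def full_def faithful_def
    using func faith fullp by blast
qed

end
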